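(* Let $\mathcal G=(V,E)$ be a connected DAG with $|V|\ge 3$ which has at least one subset $W\subseteq V$ of three vertices whose vertex-induced subgraph is connected, has a skeleton that is not the complete graph on three vertices, and is not a v-structure (i.e. not of the form $x\to z\leftarrow y$). Let $\mathcal A,\mathcal B$ be finite sets and $f:\mathcal A\to\mathcal B$ a surjection with $|\mathcal A|>|\mathcal B|>1$. Then $\hat f(\mathrm{im}(\mathcal G,\mathcal A))\not\subseteq \mathrm{im}(\mathcal G,\mathcal B)$; that is, there is a distribution on $\mathcal A^V$ factorising over $\mathcal G$ whose image under coordinatewise application of $f$ does not factorise over $\mathcal G$.
   Context: For a finite DAG $\mathcal G=(V,E)$ and a finite set $\mathcal C$, $\mathrm{im}(\mathcal G,\mathcal C)$ is the set of all probability distributions on $\mathcal C^V$ that factorise over $\mathcal G$, i.e. of the form $p(x)=\prod_{v\in V}q_v(x_v\mid x_{pa(v)})$ for conditional distributions $q_v$, where $pa(v)$ is the set of parents of $v$. For $f:\mathcal A\to\mathcal B$, $\hat f$ maps a distribution on $\mathcal A^V$ to its pushforward (image measure) on $\mathcal B^V$ under the coordinatewise map $(x_v)_v\mapsto(f(x_v))_v$. The vertex-induced subgraph on $W$ has vertex set $W$ and all edges of $E$ with both endpoints in $W$; its skeleton is the underlying undirected graph. *)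

theory Defs
  imports Complex_Main "HOL-Library.FuncSet"
begin

definition is_dag :: "'v set \<Rightarrow> ('v \<times> 'v) set \<Rightarrow> bool" where
  "is_dag V E \<longleftrightarrow> finite V \<and> E \<subseteq> V \<times> V \<and> acyclic E"

definition graph_connected :: "'v set \<Rightarrow> ('v \<times> 'v) set \<Rightarrow> bool" where
  "graph_connected V E \<longleftrightarrow> (\<forall>u\<in>V. \<forall>w\<in>V. (u, w) \<in> ((E \<inter> V \<times> V) \<union> (E \<inter> V \<times> V)\<inverse>)\<^sup>*)"

definition induced_edges :: "('v \<times> 'v) set \<Rightarrow> 'v set \<Rightarrow> ('v \<times> 'v) set" where
  "induced_edges E W = E \<inter> (W \<times> W)"

definition skeleton_complete :: "'v set \<Rightarrow> ('v \<times> 'v) set \<Rightarrow> bool" where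
  "skeleton_complete W E' \<longleftrightarrow> (\<forall>u\<in>W. \<forall>w\<in>W. u \<noteq> w \<longrightarrow> (u, w) \<in> E' \<or> (w, u) \<in> E')"

definition is_v_structure :: "'v set \<Rightarrow> ('v \<times> 'v) set \<Rightarrow> bool" where
  "is_v_structure W E' \<longleftrightarrow> (\<exists>x y z. x \<noteq> y \<and> x \<noteq> z \<and> y \<noteq> z \<and> W = {x, y, z}
      \<and> E' = {(x, z), (y, z)})"

definition parents :: "('v \<times> 'v) set \<Rightarrow> 'v \<Rightarrow> 'v set" where
  "parents E v = {u. (u, v) \<in> E}"

definition is_distribution :: "'v set \<Rightarrow> 'c set \<Rightarrow> (('v \<Rightarrow> 'c) \<Rightarrow> real) \<Rightarrow> bool" where
  "is_distribution V C p \<longleftrightarrow> (\<forall>x. x \<notin> (V \<rightarrow>\<^sub>E C) \<longrightarrow> p x = 0)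
     \<and> (\<forall>x\<in>V \<rightarrow>\<^sub>E C. p x \<ge> 0) \<and> (\<Sum>x\<in>V \<rightarrow>\<^sub>E C. p x) = 1"

text \<open>im(G, C): distributions on C^V of the form p(x) = \<Prod>_v q_v(x_v | x_pa(v)),
  where each q_v(\<cdot> | u) is a probability distribution on C for every parent
  configuration u \<in> C^pa(v).\<close>
definition im :: "'v set \<Rightarrow> ('v \<times> 'v) set \<Rightarrow> 'c set \<Rightarrow> (('v \<Rightarrow> 'c) \<Rightarrow> real) set" where
  "im V E C = {p. is_distribution V C p \<and>
     (\<exists>q :: 'v \<Rightarrow> 'c \<Rightarrow> ('v \<Rightarrow> 'c) \<Rightarrow> real.
        (\<forall>v\<in>V. \<forall>u\<in>parents E v \<rightarrow>\<^sub>E C.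
            (\<forall>c\<in>C. q v c u \<ge> 0) \<and> (\<Sum>c\<in>C. q v c u) = 1)
      \<and> (\<forall>x\<in>V \<rightarrow>\<^sub>E C. p x = (\<Prod>v\<in>V. q v (x v) (restrict x (parents E v)))))}"

definition push :: "'v set \<Rightarrow> 'a set \<Rightarrow> ('a \<Rightarrow> 'b) \<Rightarrow> (('v \<Rightarrow> 'a) \<Rightarrow> real) \<Rightarrow> ('v \<Rightarrow> 'b) \<Rightarrow> real" where
  "push V A f p = (\<lambda>y. \<Sum>x\<in>{x \<in> V \<rightarrow>\<^sub>E A. (\<lambda>v\<in>V. f (x v)) = y}. p x)"

end

theory Submission
  imports Defs
begin

lemma exists_sink:
  assumes "finite E" "acyclic E" "D \<noteq> {}"
  shows "\<exists>s\<in>D. \<forall>v\<in>D. (s,v) \<notin> E"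
proof -
  have w: "wf (E\<inverse>)" using assms finite_acyclic_wf_converse by blast
  show ?thesis
  proof (rule wfE_min'[OF w assms(3)])
    fix z assume z: "z \<in> D" and h: "\<And>y. (y,z) \<in> E\<inverse> \<Longrightarrow> y \<notin> D"
    have "\<forall>v\<in>D. (z,v) \<notin> E" using h by auto
    then show ?thesis using z by blast
  qed
qed

lemma sum_one:
  assumes finV: "finite V" and EV: "E \<subseteq> V \<times> V"
    and z: "z \<in> V \<rightarrow>\<^sub>E B" and finB: "finite B"
    and qs: "\<forall>v\<in>V. \<forall>u\<in>parents E v \<rightarrow>\<^sub>E B. (\<Sum>c\<in>B. q v c u) = (1::real)"
    and acyc: "acyclic E" and DV: "D \<subseteq> V"
  shows "(\<Sum>y\<in>{y\<in>V \<rightarrow>\<^sub>E B. \<forall>v\<in>V-D. y v = z v}. \<Prod>v\<in>D. q v (y v) (restrict y (parents E v))) = 1"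
proof -
  have "finite D" using DV finV finite_subset by blast
  then show ?thesis using DV
  proof (induction D rule: finite_psubset_induct)
    case (psubset D)
    show ?case
    proof (cases "D = {}")
      case True
      have "{y\<in>V \<rightarrow>\<^sub>E B. \<forall>v\<in>V-D. y v = z v} = {z}"
        using z True by (auto intro: PiE_ext)
      then show ?thesis using True by simp
    next
      case False
      have finE: "finite E" using EV finV by (meson finite_SigmaI finite_subset)
      obtain s where sD: "s \<in> D" and sink: "\<And>v. v \<in> D \<Longrightarrow> (s,v) \<notin> E"
        using exists_sink[OF finE acyc False] by blast
      define D' where "D' = D - {s}"
      have D'sub: "D' \<subset> D" using sD D'_def by blast
      have IH: "(\<Sum>y\<in>{y\<in>V \<rightarrow>\<^sub>E B. \<forall>v\<in>V-D'. y v = z v}. \<Prod>v\<in>D'. q v (y v) (restrict y (parents E v))) = 1"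
        using psubset.IH[OF D'sub] psubset.prems D'sub by blast
      define T where "T = {y\<in>V \<rightarrow>\<^sub>E B. \<forall>v\<in>V-D. y v = z v}"
      define T' where "T' = {y\<in>V \<rightarrow>\<^sub>E B. \<forall>v\<in>V-D'. y v = z v}"
      define h where "h = (\<lambda>y. \<Prod>v\<in>D. q v (y v) (restrict y (parents E v)))"
      define h' where "h' = (\<lambda>y. \<Prod>v\<in>D'. q v (y v) (restrict y (parents E v)))"
      have sV: "s \<in> V" using sD psubset.prems by blast
      have zs: "z s \<in> B" using z sV by blast
      have finPi: "finite (V \<rightarrow>\<^sub>E B)" using finV finB by (simp add: finite_PiE)
      have finT: "finite T" unfolding T_def using finPi by simp
      have finT': "finite T'" unfolding T'_def using finPi by simp
      have img: "(\<lambda>y. y(s := z s)) ` T \<subseteq> T'"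
      proof
        fix y' assume "y' \<in> (\<lambda>y. y(s := z s)) ` T"
        then obtain y where y: "y \<in> T" and y': "y' = y(s := z s)" by blast
        have "y' \<in> V \<rightarrow>\<^sub>E B" using y sV zs unfolding T_def y' by (auto simp: PiE_iff extensional_def)
        moreover have "\<forall>v\<in>V-D'. y' v = z v" using y unfolding T_def y' D'_def by auto
        ultimately show "y' \<in> T'" unfolding T'_def by blast
      qed
      have fib: "{y \<in> T. y(s := z s) = y'} = (\<lambda>b. y'(s := b)) ` B" if y': "y' \<in> T'" for y'
      proof
        show "{y \<in> T. y(s := z s) = y'} \<subseteq> (\<lambda>b. y'(s := b)) ` B"
        proof
          fix y assume "y \<in> {y \<in> T. y(s := z s) = y'}"
          then have y: "y \<in> T" "y(s := z s) = y'" by auto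
          have "y s \<in> B" using y(1) sV unfolding T_def by blast
          moreover have "y = y'(s := y s)" using y(2)[symmetric] by simp
          ultimately show "y \<in> (\<lambda>b. y'(s := b)) ` B" by blast
        qed
        show "(\<lambda>b. y'(s := b)) ` B \<subseteq> {y \<in> T. y(s := z s) = y'}"
        proof
          fix y assume "y \<in> (\<lambda>b. y'(s := b)) ` B"
          then obtain b where b: "b \<in> B" "y = y'(s := b)" by blast
          have y'P: "y' \<in> V \<rightarrow>\<^sub>E B" "\<forall>v\<in>V-D'. y' v = z v" using y' unfolding T'_def by auto
          have "y'(s := b) \<in> V \<rightarrow>\<^sub>E B" using y'P(1) b(1) sV by (auto simp: PiE_iff extensional_def)
          moreover have "\<forall>v\<in>V-D. (y'(s:=b)) v = z v" using y'P(2) sD D'_def by auto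
          moreover have "(y'(s := b))(s := z s) = y'" using y'P(2) sV D'_def by (auto simp: fun_eq_iff)
          ultimately show "y \<in> {y \<in> T. y(s := z s) = y'}" unfolding T_def b(2) by blast
        qed
      qed
      have fac: "h (y'(s := b)) = q s b (restrict y' (parents E s)) * h' y'" for y' b
      proof -
        have sps: "s \<notin> parents E s" using sink[OF sD] by (simp add: parents_def)
        have "h (y'(s := b)) = q s ((y'(s:=b)) s) (restrict (y'(s:=b)) (parents E s)) * (\<Prod>v\<in>D'. q v ((y'(s:=b)) v) (restrict (y'(s:=b)) (parents E v)))"
          unfolding h_def D'_def using psubset.hyps sD by (simp add: prod.remove)
        also have "restrict (y'(s:=b)) (parents E s) = restrict y' (parents E s)"
          using sps unfolding restrict_def by (rule_tac ext) auto
        also have "(\<Prod>v\<in>D'. q v ((y'(s:=b)) v) (restrict (y'(s:=b)) (parents E v))) = h' y'"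
          unfolding h'_def
        proof (rule prod.cong[OF refl])
          fix v assume v: "v \<in> D'"
          then have vs: "v \<noteq> s" "s \<notin> parents E v" using sink D'_def by (auto simp: parents_def)
          have "restrict (y'(s:=b)) (parents E v) = restrict y' (parents E v)"
            using vs unfolding restrict_def by (rule_tac ext) auto
          then show "q v ((y'(s:=b)) v) (restrict (y'(s:=b)) (parents E v)) = q v (y' v) (restrict y' (parents E v))"
            using vs by simp
        qed
        finally show ?thesis by (simp only: fun_upd_same)
      qed
      have "(\<Sum>y\<in>T. h y) = (\<Sum>y'\<in>T'. \<Sum>y\<in>{y\<in>T. y(s := z s) = y'}. h y)"
        using sum.group[OF finT finT' img, of h] by simp
      also have "\<dots> = (\<Sum>y'\<in>T'. h' y')"
      proof (rule sum.cong[OF refl])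
        fix y' assume y': "y' \<in> T'"
        have inj: "inj_on (\<lambda>b. y'(s := b)) B" unfolding inj_on_def by (metis fun_upd_same)
        have "(\<Sum>y\<in>{y\<in>T. y(s := z s) = y'}. h y) = (\<Sum>b\<in>B. h (y'(s := b)))"
          using fib[OF y'] sum.reindex[OF inj, of h] by simp
        also have "\<dots> = (\<Sum>b\<in>B. q s b (restrict y' (parents E s))) * h' y'"
          using fac by (simp add: sum_distrib_right)
        also have "(\<Sum>b\<in>B. q s b (restrict y' (parents E s))) = 1"
        proof -
          have "restrict y' (parents E s) \<in> parents E s \<rightarrow>\<^sub>E B"
            using y' EV unfolding T'_def parents_def restrict_PiE_iff by (auto simp: PiE_iff)
          then show ?thesis using qs sV by blast
        qed
        finally show "(\<Sum>y\<in>{y\<in>T. y(s := z s) = y'}. h y) = h' y'" by (simp only: mult_1_left)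
      qed
      finally have "(\<Sum>y\<in>T. h y) = (\<Sum>y'\<in>T'. h' y')" .
      then show ?thesis using IH unfolding T_def T'_def h_def h'_def by argo
    qed
  qed
qed

lemma sum_two:
  assumes "finite A" "a \<in> A" "b \<in> A" "a \<noteq> b"
  shows "(\<Sum>c\<in>A. if c = a \<or> c = b then (1/2::real) else 0) = 1"
proof -
  have "(\<Sum>c\<in>A. if c = a \<or> c = b then (1/2::real) else 0)
      = (\<Sum>c\<in>A. (if c = a then 1/2 else 0) + (if c = b then 1/2 else 0))"
    using assms by (intro sum.cong) auto
  also have "\<dots> = 1" using assms by (simp add: sum.distrib)
  finally show ?thesis .
qed

lemma prod_half:
  assumes "finite V" "r \<in> V" "\<forall>v\<in>V. g v = (if v = r then 1/2 else (1::real))"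
  shows "prod g V = 1/2"
proof -
  have "prod g V = (\<Prod>v\<in>V. if v = r then 1/2 else (1::real))"
    using assms by (intro prod.cong) auto
  also have "\<dots> = 1/2" using assms by simp
  finally show ?thesis .
qed

lemma fork_q:
  assumes finV: "finite V" and finA: "finite A"
    and V3: "e1 \<in> V" "m \<in> V" "e2 \<in> V" "e1 \<noteq> m" "e1 \<noteq> e2" "m \<noteq> e2"
    and E: "(m,e1) \<in> E" "(m,e2) \<in> E"
    and a12: "\<alpha>1 \<in> A" "\<alpha>2 \<in> A" "\<alpha>1 \<noteq> \<alpha>2" and g: "\<gamma> \<in> A" "\<gamma> \<noteq> \<alpha>1"
    and X1: "X1 = (\<lambda>v\<in>V. if v = e1 \<or> v = e2 then \<gamma> else \<alpha>1)"
    and X2: "X2 = (\<lambda>v\<in>V. if v = m then \<alpha>2 else \<alpha>1)"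
  shows "\<exists>q. (\<forall>v\<in>V. \<forall>u\<in>parents E v \<rightarrow>\<^sub>E A. (\<forall>c\<in>A. q v c u \<ge> 0) \<and> (\<Sum>c\<in>A. q v c u) = 1)
     \<and> (\<forall>x\<in>V \<rightarrow>\<^sub>E A. (if x = X1 then 1/2 else (0::real)) + (if x = X2 then 1/2 else 0)
            = (\<Prod>v\<in>V. q v (x v) (restrict x (parents E v))))"
proof -
  define q where "q = (\<lambda>v c u. if v = m then (if c = \<alpha>1 \<or> c = \<alpha>2 then 1/2 else 0)
      else if v = e1 \<or> v = e2 then (if c = (if u m = \<alpha>1 then \<gamma> else \<alpha>1) then 1 else 0)
      else (if c = \<alpha>1 then 1 else (0::real)))"
  have pm: "m \<in> parents E e1" "m \<in> parents E e2" using E by (auto simp: parents_def)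
  have X1P: "X1 \<in> V \<rightarrow>\<^sub>E A" and X2P: "X2 \<in> V \<rightarrow>\<^sub>E A" using a12 g unfolding X1 X2 by auto
  have X12: "X1 \<noteq> X2"
  proof
    assume "X1 = X2" then have "X1 e1 = X2 e1" by simp
    then show False using V3 g unfolding X1 X2 by auto
  qed
  have C1: "\<forall>v\<in>V. \<forall>u\<in>parents E v \<rightarrow>\<^sub>E A. (\<forall>c\<in>A. q v c u \<ge> 0) \<and> (\<Sum>c\<in>A. q v c u) = 1"
  proof (intro ballI conjI)
    fix v u c assume "v \<in> V" "u \<in> parents E v \<rightarrow>\<^sub>E A" "c \<in> A"
    show "q v c u \<ge> 0" unfolding q_def by auto
  next
    fix v u assume "v \<in> V" "u \<in> parents E v \<rightarrow>\<^sub>E A"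
    show "(\<Sum>c\<in>A. q v c u) = 1"
    proof (cases "v = m")
      case True then show ?thesis unfolding q_def using sum_two[OF finA a12] by simp
    next
      case False
      show ?thesis
      proof (cases "v = e1 \<or> v = e2")
        case True
        then show ?thesis unfolding q_def using False finA a12 g by simp
      next
        case F2: False
        then show ?thesis unfolding q_def using False finA a12 g by simp
      qed
    qed
  qed
  have C2: "(if x = X1 then 1/2 else 0) + (if x = X2 then 1/2 else 0)
            = (\<Prod>v\<in>V. q v (x v) (restrict x (parents E v)))" if xP: "x \<in> V \<rightarrow>\<^sub>E A" for x
  proof (cases "x = X1 \<or> x = X2")
    case True
    then show ?thesis
    proof
      assume x: "x = X1"
      have "(\<Prod>v\<in>V. q v (x v) (restrict x (parents E v))) = 1/2"
        by (rule prod_half[OF finV V3(2)]) (use V3 pm g in \<open>auto simp: x X1 q_def\<close>)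
      then show ?thesis using x X12 by simp
    next
      assume x: "x = X2"
      have "(\<Prod>v\<in>V. q v (x v) (restrict x (parents E v))) = 1/2"
        by (rule prod_half[OF finV V3(2)]) (use V3 pm g a12 in \<open>auto simp: x X2 q_def\<close>)
      then show ?thesis using x X12 by simp
    qed
  next
    case False
    have "\<exists>v\<in>V. q v (x v) (restrict x (parents E v)) = 0"
    proof (rule ccontr)
      assume "\<not> ?thesis"
      then have nz: "\<And>v. v \<in> V \<Longrightarrow> q v (x v) (restrict x (parents E v)) \<noteq> 0" by blast
      have o: "x v = \<alpha>1" if "v \<in> V" "v \<noteq> m" "v \<noteq> e1" "v \<noteq> e2" for v
        using nz[OF that(1)] that unfolding q_def by (auto split: if_splits)
      have xm: "x m = \<alpha>1 \<or> x m = \<alpha>2" using nz[OF V3(2)] unfolding q_def by (auto split: if_splits)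
      have xe1: "x e1 = (if x m = \<alpha>1 then \<gamma> else \<alpha>1)"
        using nz[OF V3(1)] V3 pm unfolding q_def by (auto split: if_splits)
      have xe2: "x e2 = (if x m = \<alpha>1 then \<gamma> else \<alpha>1)"
        using nz[OF V3(3)] V3 pm unfolding q_def by (auto split: if_splits)
      from xm show False
      proof
        assume xm1: "x m = \<alpha>1"
        have "x = X1" by (rule PiE_ext[OF xP X1P]) (use o xm1 xe1 xe2 V3 in \<open>auto simp: X1\<close>)
        then show False using False by blast
      next
        assume xm2: "x m = \<alpha>2"
        have "x = X2" by (rule PiE_ext[OF xP X2P]) (use o xm2 xe1 xe2 V3 a12 in \<open>auto simp: X2\<close>)
        then show False using False by blast
      qed
    qed
    then have "(\<Prod>v\<in>V. q v (x v) (restrict x (parents E v))) = 0" using finV by simp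
    then show ?thesis using False by simp
  qed
  show ?thesis using C1 C2 by blast
qed


lemma chain_q:
  assumes finV: "finite V" and finA: "finite A"
    and V3: "e1 \<in> V" "m \<in> V" "e2 \<in> V" "e1 \<noteq> m" "e1 \<noteq> e2" "m \<noteq> e2"
    and E: "(e1,m) \<in> E" "(m,e2) \<in> E"
    and a12: "\<alpha>1 \<in> A" "\<alpha>2 \<in> A" "\<alpha>1 \<noteq> \<alpha>2" and g: "\<gamma> \<in> A" "\<gamma> \<noteq> \<alpha>1"
    and X1: "X1 = (\<lambda>v\<in>V. if v = e1 \<or> v = e2 then \<gamma> else \<alpha>1)"
    and X2: "X2 = (\<lambda>v\<in>V. if v = m then \<alpha>2 else \<alpha>1)"
  shows "\<exists>q. (\<forall>v\<in>V. \<forall>u\<in>parents E v \<rightarrow>\<^sub>E A. (\<forall>c\<in>A. q v c u \<ge> 0) \<and> (\<Sum>c\<in>A. q v c u) = 1)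
     \<and> (\<forall>x\<in>V \<rightarrow>\<^sub>E A. (if x = X1 then 1/2 else (0::real)) + (if x = X2 then 1/2 else 0)
            = (\<Prod>v\<in>V. q v (x v) (restrict x (parents E v))))"
proof -
  define q where "q = (\<lambda>v c u. if v = e1 then (if c = \<gamma> \<or> c = \<alpha>1 then 1/2 else 0)
      else if v = m then (if c = (if u e1 = \<gamma> then \<alpha>1 else \<alpha>2) then 1 else 0)
      else if v = e2 then (if c = (if u m = \<alpha>1 then \<gamma> else \<alpha>1) then 1 else 0)
      else (if c = \<alpha>1 then 1 else (0::real)))"
  have pm: "e1 \<in> parents E m" "m \<in> parents E e2" using E by (auto simp: parents_def)
  have X1P: "X1 \<in> V \<rightarrow>\<^sub>E A" and X2P: "X2 \<in> V \<rightarrow>\<^sub>E A" using a12 g unfolding X1 X2 by auto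
  have X12: "X1 \<noteq> X2"
  proof
    assume "X1 = X2" then have "X1 e1 = X2 e1" by simp
    then show False using V3 g unfolding X1 X2 by auto
  qed
  have C1: "\<forall>v\<in>V. \<forall>u\<in>parents E v \<rightarrow>\<^sub>E A. (\<forall>c\<in>A. q v c u \<ge> 0) \<and> (\<Sum>c\<in>A. q v c u) = 1"
  proof (intro ballI conjI)
    fix v u c assume "v \<in> V" "u \<in> parents E v \<rightarrow>\<^sub>E A" "c \<in> A"
    show "q v c u \<ge> 0" unfolding q_def by auto
  next
    fix v u assume "v \<in> V" "u \<in> parents E v \<rightarrow>\<^sub>E A"
    show "(\<Sum>c\<in>A. q v c u) = 1"
    proof (cases "v = e1")
      case True then show ?thesis unfolding q_def using sum_two[OF finA g(1) a12(1) g(2)] by simp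
    next
      case F1: False
      show ?thesis
      proof (cases "v = m")
        case True then show ?thesis unfolding q_def using F1 finA a12 g by simp
      next
        case F2: False
        show ?thesis
        proof (cases "v = e2")
          case True then show ?thesis unfolding q_def using F1 F2 finA a12 g by simp
        next
          case F3: False then show ?thesis unfolding q_def using F1 F2 finA a12 g by simp
        qed
      qed
    qed
  qed
  have C2: "(if x = X1 then 1/2 else 0) + (if x = X2 then 1/2 else 0)
            = (\<Prod>v\<in>V. q v (x v) (restrict x (parents E v)))" if xP: "x \<in> V \<rightarrow>\<^sub>E A" for x
  proof (cases "x = X1 \<or> x = X2")
    case True
    then show ?thesis
    proof
      assume x: "x = X1"
      have "(\<Prod>v\<in>V. q v (x v) (restrict x (parents E v))) = 1/2"
        by (rule prod_half[OF finV V3(1)]) (use V3 pm g in \<open>auto simp: x X1 q_def\<close>)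
      then show ?thesis using x X12 by simp
    next
      assume x: "x = X2"
      have "(\<Prod>v\<in>V. q v (x v) (restrict x (parents E v))) = 1/2"
        by (rule prod_half[OF finV V3(1)]) (use V3 pm g a12 in \<open>auto simp: x X2 q_def\<close>)
      then show ?thesis using x X12 by simp
    qed
  next
    case False
    have "\<exists>v\<in>V. q v (x v) (restrict x (parents E v)) = 0"
    proof (rule ccontr)
      assume "\<not> ?thesis"
      then have nz: "\<And>v. v \<in> V \<Longrightarrow> q v (x v) (restrict x (parents E v)) \<noteq> 0" by blast
      have o: "x v = \<alpha>1" if "v \<in> V" "v \<noteq> m" "v \<noteq> e1" "v \<noteq> e2" for v
        using nz[OF that(1)] that unfolding q_def by (auto split: if_splits)
      have xe1: "x e1 = \<gamma> \<or> x e1 = \<alpha>1" using nz[OF V3(1)] unfolding q_def by (auto split: if_splits)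
      have xm: "x m = (if x e1 = \<gamma> then \<alpha>1 else \<alpha>2)"
        using nz[OF V3(2)] V3 pm unfolding q_def by (auto split: if_splits)
      have xe2: "x e2 = (if x m = \<alpha>1 then \<gamma> else \<alpha>1)"
        using nz[OF V3(3)] V3 pm unfolding q_def by (auto split: if_splits)
      from xe1 show False
      proof
        assume xe11: "x e1 = \<gamma>"
        have "x = X1" by (rule PiE_ext[OF xP X1P]) (use o xe11 xm xe2 V3 in \<open>auto simp: X1\<close>)
        then show False using False by blast
      next
        assume xe12: "x e1 = \<alpha>1"
        have "x = X2" by (rule PiE_ext[OF xP X2P]) (use o xe12 xm xe2 V3 a12 g in \<open>auto simp: X2\<close>)
        then show False using False by blast
      qed
    qed
    then have "(\<Prod>v\<in>V. q v (x v) (restrict x (parents E v))) = 0" using finV by simp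
    then show ?thesis using False by simp
  qed
  show ?thesis using C1 C2 by blast
qed

lemma core:
  fixes V :: "'v set" and E :: "('v \<times> 'v) set"
    and A :: "'a set" and B :: "'b set" and f :: "'a \<Rightarrow> 'b"
  assumes dag: "is_dag V E"
    and finA: "finite A" and finB: "finite B"
    and surj: "f ` A = B"
    and cardAB: "card A > card B" "card B > 1"
    and V3: "e1 \<in> V" "m \<in> V" "e2 \<in> V" "e1 \<noteq> m" "e1 \<noteq> e2" "m \<noteq> e2"
    and nadj: "(e1,e2) \<notin> E" "(e2,e1) \<notin> E"
    and me2: "(m,e2) \<in> E"
    and me1: "(m,e1) \<in> E \<or> (e1,m) \<in> E"
  shows "\<not> (push V A f ` im V E A \<subseteq> im V E B)"
proof
  assume sub: "push V A f ` im V E A \<subseteq> im V E B"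
  have finV: "finite V" and EV: "E \<subseteq> V \<times> V" and acyc: "acyclic E"
    using dag unfolding is_dag_def by auto
  have "\<not> inj_on f A"
  proof
    assume "inj_on f A"
    then have "card B = card A" using surj card_image by blast
    then show False using cardAB by simp
  qed
  then obtain \<alpha>1 \<alpha>2 where a12: "\<alpha>1 \<in> A" "\<alpha>2 \<in> A" "\<alpha>1 \<noteq> \<alpha>2" "f \<alpha>1 = f \<alpha>2"
    unfolding inj_on_def by blast
  define \<beta> where "\<beta> = f \<alpha>1"
  have "\<exists>b\<in>B. b \<noteq> \<beta>"
  proof (rule ccontr)
    assume "\<not> ?thesis" then have "B \<subseteq> {\<beta>}" by blast
    then have "card B \<le> 1" using card_mono[of "{\<beta>}" B] by simp
    then show False using cardAB by simp
  qed
  then obtain \<gamma> where g: "\<gamma> \<in> A" "f \<gamma> \<noteq> \<beta>" using surj by blast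
  define \<beta>' where "\<beta>' = f \<gamma>"
  have bb: "\<beta> \<in> B" "\<beta>' \<in> B" "\<beta> \<noteq> \<beta>'" using surj a12 g unfolding \<beta>_def \<beta>'_def by auto
  have ga: "\<gamma> \<noteq> \<alpha>1" using g \<beta>_def by auto
  define X1 where "X1 = (\<lambda>v\<in>V. if v = e1 \<or> v = e2 then \<gamma> else \<alpha>1)"
  define X2 where "X2 = (\<lambda>v\<in>V. if v = m then \<alpha>2 else \<alpha>1)"
  define p where "p = (\<lambda>x. (if x = X1 then 1/2 else 0) + (if x = X2 then 1/2 else (0::real)))"
  have X1P: "X1 \<in> V \<rightarrow>\<^sub>E A" and X2P: "X2 \<in> V \<rightarrow>\<^sub>E A" using a12 g unfolding X1_def X2_def by auto
  have X12: "X1 \<noteq> X2"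
  proof
    assume "X1 = X2" then have "X1 e1 = X2 e1" by simp
    then show False using V3 ga unfolding X1_def X2_def by auto
  qed
  have qex: "\<exists>q. (\<forall>v\<in>V. \<forall>u\<in>parents E v \<rightarrow>\<^sub>E A. (\<forall>c\<in>A. q v c u \<ge> 0) \<and> (\<Sum>c\<in>A. q v c u) = 1)
     \<and> (\<forall>x\<in>V \<rightarrow>\<^sub>E A. (if x = X1 then 1/2 else (0::real)) + (if x = X2 then 1/2 else 0)
            = (\<Prod>v\<in>V. q v (x v) (restrict x (parents E v))))"
    using me1
  proof
    assume "(m,e1) \<in> E"
    then show ?thesis using fork_q[OF finV finA V3 _ me2 a12(1-3) g(1) ga X1_def X2_def] by blast
  next
    assume "(e1,m) \<in> E"
    then show ?thesis using chain_q[OF finV finA V3 _ me2 a12(1-3) g(1) ga X1_def X2_def] by blast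
  qed
  have pdist: "is_distribution V A p"
    unfolding is_distribution_def
  proof (intro conjI allI impI ballI)
    fix x assume "x \<notin> V \<rightarrow>\<^sub>E A" then show "p x = 0" using X1P X2P unfolding p_def by auto
  next
    fix x show "p x \<ge> 0" unfolding p_def by auto
  next
    have "finite (V \<rightarrow>\<^sub>E A)" using finV finA by (simp add: finite_PiE)
    then show "(\<Sum>x\<in>V \<rightarrow>\<^sub>E A. p x) = 1" using X1P X2P unfolding p_def by (simp add: sum.distrib)
  qed
  have pim: "p \<in> im V E A" unfolding im_def using pdist qex unfolding p_def by auto
  have "push V A f p \<in> im V E B" using sub pim by blast
  then obtain q' where q'sum: "\<forall>v\<in>V. \<forall>u\<in>parents E v \<rightarrow>\<^sub>E B. (\<forall>c\<in>B. q' v c u \<ge> 0) \<and> (\<Sum>c\<in>B. q' v c u) = 1"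
      and q'prod: "\<forall>y\<in>V \<rightarrow>\<^sub>E B. push V A f p y = (\<Prod>v\<in>V. q' v (y v) (restrict y (parents E v)))"
    unfolding im_def by blast
  define Y1 where "Y1 = (\<lambda>v\<in>V. f (X1 v))"
  define Y2 where "Y2 = (\<lambda>v\<in>V. f (X2 v))"
  have pushP: "push V A f p y = (if y = Y1 then 1/2 else 0) + (if y = Y2 then 1/2 else 0)" for y
  proof -
    let ?M = "{x \<in> V \<rightarrow>\<^sub>E A. (\<lambda>v\<in>V. f (x v)) = y}"
    have fin: "finite ?M" using finV finA by (simp add: finite_PiE)
    have "push V A f p y = (\<Sum>x\<in>?M. (if x = X1 then 1/2 else 0)) + (\<Sum>x\<in>?M. (if x = X2 then 1/2 else (0::real)))"
      unfolding push_def p_def by (simp add: sum.distrib)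
    also have "\<dots> = (if X1 \<in> ?M then 1/2 else 0) + (if X2 \<in> ?M then 1/2 else 0)"
      using fin by (simp only: sum.delta)
    also have "\<dots> = (if y = Y1 then 1/2 else 0) + (if y = Y2 then 1/2 else 0)"
      using X1P X2P unfolding Y1_def Y2_def by auto
    finally show ?thesis .
  qed
  define Z where "Z = (\<lambda>a c. (\<lambda>v\<in>V. if v = e1 then a else if v = e2 then c else \<beta>))"
  have ZP: "Z a c \<in> V \<rightarrow>\<^sub>E B" if "a \<in> B" "c \<in> B" for a c using that bb unfolding Z_def by auto
  have Y1Z: "Y1 = Z \<beta>' \<beta>'" unfolding Y1_def Z_def X1_def \<beta>'_def \<beta>_def using V3 by (auto simp: fun_eq_iff)
  have Y2Z: "Y2 = Z \<beta> \<beta>" unfolding Y2_def Z_def X2_def \<beta>_def using V3 a12 by (auto simp: fun_eq_iff)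
  define S where "S = {v\<in>V. \<exists>w\<in>{e1,m,e2}. (v,w) \<in> E\<^sup>*}"
  have SV: "S \<subseteq> V" unfolding S_def by auto
  have eS: "e1 \<in> S" "e2 \<in> S" unfolding S_def using V3 by auto
  have anc: "parents E v \<subseteq> S" if vS0: "v \<in> S" for v
  proof
    fix u assume "u \<in> parents E v"
    then have uv: "(u,v) \<in> E" by (simp add: parents_def)
    then have "u \<in> V" using EV by auto
    moreover obtain w where w: "w \<in> {e1,m,e2}" "(v,w) \<in> E\<^sup>*" using vS0 unfolding S_def by auto
    moreover have "(u,w) \<in> E\<^sup>*" using uv w(2) by (rule converse_rtrancl_into_rtrancl)
    ultimately show "u \<in> S" unfolding S_def by auto
  qed
  have nocyc: "(x,x) \<notin> E\<^sup>+" for x using acyc unfolding acyclic_def by blast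
  have nb: "\<not> (e1 \<in> insert v (parents E v) \<and> e2 \<in> insert v (parents E v))" if vS: "v \<in> S" for v
  proof
    assume both: "e1 \<in> insert v (parents E v) \<and> e2 \<in> insert v (parents E v)"
    show False
    proof (cases "v = e1 \<or> v = e2")
      case True then show False using both nadj V3 by (auto simp: parents_def)
    next
      case False
      then have E12: "(e1,v) \<in> E" "(e2,v) \<in> E" using both by (auto simp: parents_def)
      obtain w where w: "w \<in> {e1,m,e2}" "(v,w) \<in> E\<^sup>*" using vS unfolding S_def by blast
      have t1: "(e1,w) \<in> E\<^sup>+" using E12(1) w(2) by (rule rtrancl_into_trancl2)
      have t2: "(e2,w) \<in> E\<^sup>+" using E12(2) w(2) by (rule rtrancl_into_trancl2)
      have "w = e1 \<or> w = m \<or> w = e2" using w(1) by simp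
      then show False
      proof (elim disjE)
        assume "w = e1" then show False using t1 nocyc by blast
      next
        assume "w = m" then have "(e2,e2) \<in> E\<^sup>+" using t2 me2 trancl_into_trancl by metis
        then show False using nocyc by blast
      next
        assume "w = e2" then show False using t2 nocyc by blast
      qed
    qed
  qed
  define G where "G = (\<lambda>v a c. q' v (Z a c v) (restrict (Z a c) (parents E v)))"
  define F where "F = (\<lambda>a c. \<Prod>v\<in>S. G v a c)"
  define T where "T = (\<lambda>a c. {y\<in>V \<rightarrow>\<^sub>E B. \<forall>v\<in>V-(V-S). y v = Z a c v})"
  have finS: "finite S" using SV finV finite_subset by blast
  have q'sum1: "\<forall>v\<in>V. \<forall>u\<in>parents E v \<rightarrow>\<^sub>E B. (\<Sum>c\<in>B. q' v c u) = 1" using q'sum by blast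
  have key: "(\<Sum>y\<in>T a c. push V A f p y) = F a c" if ab: "a \<in> B" "c \<in> B" for a c
  proof -
    have "(\<Sum>y\<in>T a c. push V A f p y) = (\<Sum>y\<in>T a c. F a c * (\<Prod>v\<in>V-S. q' v (y v) (restrict y (parents E v))))"
    proof (rule sum.cong[OF refl])
      fix y assume y: "y \<in> T a c"
      then have yP: "y \<in> V \<rightarrow>\<^sub>E B" and yS: "\<And>v. v \<in> S \<Longrightarrow> y v = Z a c v" unfolding T_def using SV by auto
      have "push V A f p y = (\<Prod>v\<in>V. q' v (y v) (restrict y (parents E v)))" using q'prod yP by blast
      also have "\<dots> = (\<Prod>v\<in>V-S. q' v (y v) (restrict y (parents E v))) * (\<Prod>v\<in>S. q' v (y v) (restrict y (parents E v)))"
        using prod.subset_diff[OF SV finV] by blast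
      also have "(\<Prod>v\<in>S. q' v (y v) (restrict y (parents E v))) = F a c"
        unfolding F_def G_def
      proof (rule prod.cong[OF refl])
        fix v assume vS: "v \<in> S"
        have "restrict y (parents E v) = restrict (Z a c) (parents E v)"
          using anc[OF vS] yS by (intro ext) (auto simp: restrict_def)
        then show "q' v (y v) (restrict y (parents E v)) = q' v (Z a c v) (restrict (Z a c) (parents E v))"
          using yS[OF vS] by simp
      qed
      finally show "push V A f p y = F a c * (\<Prod>v\<in>V-S. q' v (y v) (restrict y (parents E v)))" by (simp only: mult.commute)
    qed
    also have "\<dots> = F a c * (\<Sum>y\<in>T a c. \<Prod>v\<in>V-S. q' v (y v) (restrict y (parents E v)))"
      by (simp add: sum_distrib_left)
    also have "(\<Sum>y\<in>T a c. \<Prod>v\<in>V-S. q' v (y v) (restrict y (parents E v))) = 1"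
      unfolding T_def using sum_one[OF finV EV ZP[OF ab] finB q'sum1 acyc, of "V - S"] by blast
    finally show ?thesis by simp
  qed
  have finT: "finite (T a c)" for a c unfolding T_def using finV finB by (simp add: finite_PiE)
  have key2: "(\<Sum>y\<in>T a c. push V A f p y) = (if Y1 \<in> T a c then 1/2 else 0) + (if Y2 \<in> T a c then 1/2 else 0)" for a c
  proof -
    have "(\<Sum>y\<in>T a c. push V A f p y) = (\<Sum>y\<in>T a c. if y = Y1 then 1/2 else 0) + (\<Sum>y\<in>T a c. if y = Y2 then 1/2 else (0::real))"
      unfolding pushP by (simp add: sum.distrib)
    also have "\<dots> = (if Y1 \<in> T a c then 1/2 else 0) + (if Y2 \<in> T a c then 1/2 else 0)"
      using finT[of a c] by (simp only: sum.delta)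
    finally show ?thesis .
  qed
  have eS': "e1 \<in> V - (V - S)" "e2 \<in> V - (V - S)" using eS SV by auto
  have Zv: "Z a c e1 = a" "Z a c e2 = c" for a c unfolding Z_def using V3 by auto
  have Znot: "Z a c \<notin> T a' c'" if ne: "a \<noteq> a' \<or> c \<noteq> c'" for a c a' c'
  proof
    assume "Z a c \<in> T a' c'"
    then have "Z a c e1 = Z a' c' e1" "Z a c e2 = Z a' c' e2" using eS' unfolding T_def by auto
    then show False using ne Zv by simp
  qed
  have m1: "Y1 \<in> T \<beta>' \<beta>'" unfolding T_def Y1Z using ZP bb by auto
  have m2: "Y2 \<notin> T \<beta>' \<beta>'" unfolding Y2Z by (rule Znot) (use bb in auto)
  have m3: "Y2 \<in> T \<beta> \<beta>" unfolding T_def Y2Z using ZP bb by auto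
  have m4: "Y1 \<notin> T \<beta> \<beta>" unfolding Y1Z by (rule Znot) (use bb in auto)
  have m5: "Y1 \<notin> T \<beta>' \<beta>" unfolding Y1Z by (rule Znot) (use bb in auto)
  have m6: "Y2 \<notin> T \<beta>' \<beta>" unfolding Y2Z by (rule Znot) (use bb in auto)
  have m7: "Y1 \<notin> T \<beta> \<beta>'" unfolding Y1Z by (rule Znot) (use bb in auto)
  have m8: "Y2 \<notin> T \<beta> \<beta>'" unfolding Y2Z by (rule Znot) (use bb in auto)
  have F1: "F \<beta>' \<beta>' = 1/2" using key[of \<beta>' \<beta>'] key2[of \<beta>' \<beta>'] m1 m2 bb by simp
  have F2: "F \<beta> \<beta> = 1/2" using key[of \<beta> \<beta>] key2[of \<beta> \<beta>] m3 m4 bb by simp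
  have F3: "F \<beta>' \<beta> = 0" using key[of \<beta>' \<beta>] key2[of \<beta>' \<beta>] m5 m6 bb by simp
  have F4: "F \<beta> \<beta>' = 0" using key[of \<beta> \<beta>'] key2[of \<beta> \<beta>'] m7 m8 bb by simp
  have Gid: "G v \<beta>' \<beta>' * G v \<beta> \<beta> = G v \<beta>' \<beta> * G v \<beta> \<beta>'" if vS: "v \<in> S" for v
  proof (cases "e2 \<in> insert v (parents E v)")
    case False
    have "G v a c = G v a c'" for a c c'
    proof -
      have "Z a c v = Z a c' v" using False unfolding Z_def by auto
      moreover have "restrict (Z a c) (parents E v) = restrict (Z a c') (parents E v)"
        using False by (intro ext) (auto simp: restrict_def Z_def)
      ultimately show ?thesis unfolding G_def by simp
    qed
    then have "G v \<beta>' \<beta>' = G v \<beta>' \<beta>" "G v \<beta> \<beta> = G v \<beta> \<beta>'" by blast+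
    then show ?thesis by simp
  next
    case True
    then have False': "e1 \<notin> insert v (parents E v)" using nb[OF vS] by blast
    have "G v a c = G v a' c" for a a' c
    proof -
      have "Z a c v = Z a' c v" using False' unfolding Z_def by auto
      moreover have "restrict (Z a c) (parents E v) = restrict (Z a' c) (parents E v)"
        using False' by (intro ext) (auto simp: restrict_def Z_def)
      ultimately show ?thesis unfolding G_def by simp
    qed
    then have "G v \<beta>' \<beta>' = G v \<beta> \<beta>'" "G v \<beta> \<beta> = G v \<beta>' \<beta>" by blast+
    then show ?thesis by simp
  qed
  have "F \<beta>' \<beta>' * F \<beta> \<beta> = (\<Prod>v\<in>S. G v \<beta>' \<beta>' * G v \<beta> \<beta>)" unfolding F_def by (simp add: prod.distrib)
  also have "\<dots> = (\<Prod>v\<in>S. G v \<beta>' \<beta> * G v \<beta> \<beta>')" using Gid by (intro prod.cong) auto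
  also have "\<dots> = F \<beta>' \<beta> * F \<beta> \<beta>'" unfolding F_def by (simp add: prod.distrib)
  finally show False using F1 F2 F3 F4 by simp
qed

theorem mainTheorem2:
  fixes V :: "'v set" and E :: "('v \<times> 'v) set"
    and A :: "'a set" and B :: "'b set" and f :: "'a \<Rightarrow> 'b"
  assumes dag: "is_dag V E"
    and conn: "graph_connected V E"
    and card_V: "card V \<ge> 3"
    and W_ex: "\<exists>W \<subseteq> V. card W = 3 \<and> graph_connected W (induced_edges E W)
                 \<and> \<not> skeleton_complete W (induced_edges E W)
                 \<and> \<not> is_v_structure W (induced_edges E W)"
    and finA: "finite A" and finB: "finite B"
    and surj: "f ` A = B"
    and cardAB: "card A > card B" "card B > 1"
  shows "\<not> (push V A f ` im V E A \<subseteq> im V E B)"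
proof -
  have acyc: "acyclic E" and EV: "E \<subseteq> V \<times> V" using dag unfolding is_dag_def by auto
  have nocyc: "(x,x) \<notin> E\<^sup>+" for x using acyc unfolding acyclic_def by blast
  have noloop: "(x,x) \<notin> E" for x using nocyc by blast
  have no2: "(x,y) \<in> E \<Longrightarrow> (y,x) \<notin> E" for x y
  proof
    assume "(x,y) \<in> E" "(y,x) \<in> E"
    then have "(x,x) \<in> E\<^sup>+" by (meson trancl.r_into_trancl trancl_into_trancl)
    then show False using nocyc by blast
  qed
  obtain W where WV: "W \<subseteq> V" and cW: "card W = 3"
    and cn: "graph_connected W (induced_edges E W)"
    and nc: "\<not> skeleton_complete W (induced_edges E W)"
    and nv: "\<not> is_v_structure W (induced_edges E W)" using W_ex by blast
  obtain u w where uw: "u \<in> W" "w \<in> W" "u \<noteq> w" "(u,w) \<notin> E" "(w,u) \<notin> E"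
    using nc unfolding skeleton_complete_def induced_edges_def by blast
  have "card (W - {u,w}) = 1" using cW uw by (simp add: card_Diff_subset)
  then obtain y where y: "W - {u,w} = {y}" by (meson card_1_singletonE)
  have yW: "y \<in> W" "y \<noteq> u" "y \<noteq> w" using y by auto
  have Weq: "W = {u,w,y}" using y uw by auto
  define R where "R = (induced_edges E W \<inter> W \<times> W) \<union> (induced_edges E W \<inter> W \<times> W)\<inverse>"
  have adj: "(a,y) \<in> E \<or> (y,a) \<in> E" if a: "a \<in> W" "a \<noteq> y" "b \<in> W" "b \<noteq> y" "a \<noteq> b"
      "(a,b) \<notin> E" "(b,a) \<notin> E" for a b
  proof -
    have "(a,b) \<in> R\<^sup>*" using cn a unfolding graph_connected_def R_def by blast
    then obtain t where t: "(a,t) \<in> R" using a(5) by (metis converse_rtranclE)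
    then have tW: "t \<in> W" and ta: "(a,t) \<in> E \<or> (t,a) \<in> E"
      unfolding R_def induced_edges_def by auto
    have "t \<noteq> a" using ta noloop by auto
    moreover have "t \<noteq> b" using ta a by auto
    ultimately have "t = y" using tW a Weq by auto
    then show ?thesis using ta by simp
  qed
  have ay: "(u,y) \<in> E \<or> (y,u) \<in> E" using adj[of u w] uw yW by auto
  have wy: "(w,y) \<in> E \<or> (y,w) \<in> E" using adj[of w u] uw yW by auto
  have notv: "\<not> ((u,y) \<in> E \<and> (w,y) \<in> E)"
  proof
    assume h: "(u,y) \<in> E \<and> (w,y) \<in> E"
    have IE: "induced_edges E W = {(u,y),(w,y)}"
    proof
      show "induced_edges E W \<subseteq> {(u,y),(w,y)}"
      proof
        fix e assume e: "e \<in> induced_edges E W"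
        then obtain a b where ab: "e = (a,b)" "(a,b) \<in> E" "a \<in> W" "b \<in> W" unfolding induced_edges_def by auto
        have "a \<in> {u,w,y}" "b \<in> {u,w,y}" using ab Weq by auto
        moreover have "(y,u) \<notin> E" "(y,w) \<notin> E" using h no2 by blast+
        ultimately show "e \<in> {(u,y),(w,y)}" using ab(1,2) uw(4,5) noloop[of u] noloop[of w] noloop[of y] by auto
      qed
      show "{(u,y),(w,y)} \<subseteq> induced_edges E W" using h uw yW unfolding induced_edges_def by auto
    qed
    have "u \<noteq> w \<and> u \<noteq> y \<and> w \<noteq> y \<and> W = {u, w, y} \<and> induced_edges E W = {(u, y), (w, y)}"
      using IE Weq uw(3) yW(2,3) by simp
    then have "is_v_structure W (induced_edges E W)"
      unfolding is_v_structure_def by blast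
    then show False using nv by blast
  qed
  have inV: "u \<in> V" "w \<in> V" "y \<in> V" using uw yW WV by auto
  have "(y,w) \<in> E \<or> (y,u) \<in> E" using notv ay wy by blast
  then show ?thesis
  proof
    assume yw: "(y,w) \<in> E"
    show ?thesis
      by (rule core[OF dag finA finB surj cardAB inV(1) inV(3) inV(2) _ uw(3) _ uw(4) uw(5) yw])
         (use yW ay in auto)
  next
    assume yu: "(y,u) \<in> E"
    show ?thesis
      by (rule core[OF dag finA finB surj cardAB inV(2) inV(3) inV(1) _ _ _ uw(5) uw(4) yu])
         (use yW uw wy in auto)
  qed
qed

end
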